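(* Let $t,k,d,m,\ell$ be positive integers with $m\ge d$, and let $\mathbb{F}$ be a finite field. If $\Pi$ is a $t$-private $k$-server linear HSS for $\mathsf{POLY}_{d,m}(\mathbb{F})^\ell$, then $dt<k$ and the download cost of $\Pi$ is at least $k\ell\log_2|\mathbb{F}|/(k-dt)$. Consequently the download rate of $\Pi$ is at most $1-dt/k$.
   Context: $\mathsf{POLY}_{d,m}(\mathbb{F})$: polynomials in $\mathbb{F}[X_1,\dots,X_m]$ of total degree at most $d$. $\mathcal{F}^\ell$: the class of maps $(x_{i,r})_{i\in[m],r\in[\ell]}\mapsto(f_1(\mathbf{x}_1),\dots,f_\ell(\mathbf{x}_\ell))$, $\mathbf{x}_r=(x_{1,r},\dots,x_{m,r})$, $f_r\in\mathcal{F}$, where all $\ell m$ inputs are shared independently. A $k$-server HSS $(\mathsf{Share},\mathsf{Eval},\mathsf{Rec})$: randomized $\mathsf{Share}$ splits each input into $k$ input shares; server $j$ computes $y^{(j)}=\mathsf{Eval}(f,j,\text{its input shares})$; $\mathsf{Rec}(y^{(1)},\dots,y^{(k)})$ equals the function value with probability 1; $t$-private if for every set of at most $t$ servers the distribution of their input shares does not depend on the input. Linear HSS: $\mathcal{X}=\mathbb{F}$, $\mathsf{Share}(x,\mathbf{r})$ is $\mathbb{F}$-linear in $x$ and a uniformly random vector $\mathbf{r}$ over $\mathbb{F}$, $y^{(j)}\in\mathbb{F}^{b_j}$, and $\mathsf{Rec}$ is $\mathbb{F}$-linear ($\mathsf{Eval}$ arbitrary). Download cost $=\sum_j b_j\log_2|\mathbb{F}|$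 bits; download rate $=\ell\log_2|\mathbb{F}|/$download cost. *)

theory Defs
  imports Complex_Main "HOL-Library.Cardinality"
begin

definition monoms :: "nat \<Rightarrow> nat \<Rightarrow> (nat \<Rightarrow> nat) set" where
  "monoms m d = {\<alpha>. (\<forall>i\<ge>m. \<alpha> i = 0) \<and> (\<Sum>i<m. \<alpha> i) \<le> d}"

(* POLY_{d,m}(F): polynomials given by their coefficient functions, supported on monoms m d *)
definition POLY :: "nat \<Rightarrow> nat \<Rightarrow> ((nat \<Rightarrow> nat) \<Rightarrow> 'a::field) set" where
  "POLY d m = {c. \<forall>\<alpha>. \<alpha> \<notin> monoms m d \<longrightarrow> c \<alpha> = 0}"

definition peval :: "nat \<Rightarrow> nat \<Rightarrow> ((nat \<Rightarrow> nat) \<Rightarrow> 'a::field) \<Rightarrow> (nat \<Rightarrow> 'a) \<Rightarrow> 'a" where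
  "peval d m c x = (\<Sum>\<alpha>\<in>monoms m d. c \<alpha> * (\<Prod>i<m. x i ^ \<alpha> i))"

(* Linear sharing: the share of server j of input x with randomness r \<in> F^\<rho> is the
   vector in F^{sd j} (coordinates u < sd j) given by an F-linear map of (x, r). *)
definition share :: "nat \<Rightarrow> (nat \<Rightarrow> nat) \<Rightarrow> (nat \<Rightarrow> nat \<Rightarrow> 'a::field) \<Rightarrow>
    (nat \<Rightarrow> nat \<Rightarrow> nat \<Rightarrow> 'a) \<Rightarrow> nat \<Rightarrow> 'a \<Rightarrow> (nat \<Rightarrow> 'a) \<Rightarrow> (nat \<Rightarrow> 'a)" where
  "share \<rho> sd A B j x r =
     (\<lambda>u. if u < sd j then x * A j u + (\<Sum>q<\<rho>. r q * B j q u) else 0)"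

(* randomness for all inputs x_{i,s} (i < m, s < l): independent vectors in F^\<rho> *)
definition rand_space :: "nat \<Rightarrow> nat \<Rightarrow> nat \<Rightarrow> (nat \<Rightarrow> nat \<Rightarrow> nat \<Rightarrow> 'a::zero) set" where
  "rand_space m l \<rho> = {R. \<forall>i s q. \<not> (i < m \<and> s < l \<and> q < \<rho>) \<longrightarrow> R i s q = 0}"

definition view :: "nat \<Rightarrow> (nat \<Rightarrow> nat) \<Rightarrow> (nat \<Rightarrow> nat \<Rightarrow> 'a::field) \<Rightarrow>
    (nat \<Rightarrow> nat \<Rightarrow> nat \<Rightarrow> 'a) \<Rightarrow> nat \<Rightarrow> nat \<Rightarrow> nat \<Rightarrow> (nat \<Rightarrow> nat \<Rightarrow> 'a)
    \<Rightarrow> (nat \<Rightarrow> nat \<Rightarrow> nat \<Rightarrow> 'a) \<Rightarrow> nat \<Rightarrow> nat \<Rightarrow> (nat \<Rightarrow> 'a)" where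
  "view \<rho> sd A B m l j X R =
     (\<lambda>i s. if i < m \<and> s < l then share \<rho> sd A B j (X i s) (R i s) else (\<lambda>_. 0))"

(* A k-server linear HSS for POLY_{d,m}(F)^l:
   sharing given by (\<rho>, sd, A, B); Eval = ev (arbitrary), server j outputs a vector in F^{b j};
   Rec is the F-linear map  y \<mapsto> (\<Sum>j<k. \<Sum>u<b j. L s j u * y_j u)_{s<l}. *)
definition linear_HSS_POLY ::
  "nat \<Rightarrow> nat \<Rightarrow> nat \<Rightarrow> nat \<Rightarrow> nat \<Rightarrow> (nat \<Rightarrow> nat) \<Rightarrow> (nat \<Rightarrow> nat \<Rightarrow> 'a::field) \<Rightarrow>
   (nat \<Rightarrow> nat \<Rightarrow> nat \<Rightarrow> 'a) \<Rightarrow> (nat \<Rightarrow> nat) \<Rightarrow>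
   ((nat \<Rightarrow> (nat \<Rightarrow> nat) \<Rightarrow> 'a) \<Rightarrow> nat \<Rightarrow> (nat \<Rightarrow> nat \<Rightarrow> nat \<Rightarrow> 'a) \<Rightarrow> (nat \<Rightarrow> 'a)) \<Rightarrow>
   (nat \<Rightarrow> nat \<Rightarrow> nat \<Rightarrow> 'a) \<Rightarrow> bool" where
  "linear_HSS_POLY k d m l \<rho> sd A B b ev L \<longleftrightarrow>
     (\<forall>fs X R. (\<forall>s<l. fs s \<in> POLY d m) \<longrightarrow> R \<in> rand_space m l \<rho> \<longrightarrow>
        (\<forall>s<l. (\<Sum>j<k. \<Sum>u<b j. L s j u * ev fs j (view \<rho> sd A B m l j X R) u)
               = peval d m (fs s) (\<lambda>i. X i s)))"

(* t-privacy: for every set T of at most t servers, the joint distribution of their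
   input shares (randomness uniform on rand_space) does not depend on the inputs X. *)
definition HSS_private ::
  "nat \<Rightarrow> nat \<Rightarrow> nat \<Rightarrow> nat \<Rightarrow> nat \<Rightarrow> (nat \<Rightarrow> nat) \<Rightarrow> (nat \<Rightarrow> nat \<Rightarrow> 'a::field) \<Rightarrow>
   (nat \<Rightarrow> nat \<Rightarrow> nat \<Rightarrow> 'a) \<Rightarrow> bool" where
  "HSS_private t k m l \<rho> sd A B \<longleftrightarrow>
     (\<forall>T X X' W. T \<subseteq> {..<k} \<longrightarrow> card T \<le> t \<longrightarrow>
        card {R \<in> rand_space m l \<rho>. \<forall>j\<in>T. view \<rho> sd A B m l j X R = W j}
      = card {R \<in> rand_space m l \<rho>. \<forall>j\<in>T. view \<rho> sd A B m l j X' R = W j})"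

definition download_cost :: "'a::finite itself \<Rightarrow> nat \<Rightarrow> (nat \<Rightarrow> nat) \<Rightarrow> real" where
  "download_cost (_::'a itself) k b = real (\<Sum>j<k. b j) * log 2 (real CARD('a))"

definition download_rate :: "'a::finite itself \<Rightarrow> nat \<Rightarrow> nat \<Rightarrow> (nat \<Rightarrow> nat) \<Rightarrow> real" where
  "download_rate (T::'a itself) l k b = real l * log 2 (real CARD('a)) / download_cost T k b"

end

theory Submission
  imports Defs "HOL-Library.FuncSet"
begin

lemma finite_rand_space: "finite (rand_space m l \<rho> :: (nat \<Rightarrow> nat \<Rightarrow> nat \<Rightarrow> 'a::{finite,zero}) set)"
proof -
  define box where "box = {..<m} \<times> {..<l} \<times> {..<\<rho>}"
  define f where "f = (\<lambda>R::nat \<Rightarrow> nat \<Rightarrow> nat \<Rightarrow> 'a. restrict (\<lambda>(i,s,q). R i s q) box)"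
  have "f ` rand_space m l \<rho> \<subseteq> PiE box (\<lambda>_. UNIV)" unfolding f_def by auto
  moreover have "finite (PiE box (\<lambda>_. (UNIV::'a set)))" by (rule finite_PiE) (auto simp: box_def)
  ultimately have "finite (f ` rand_space m l \<rho>)" by (rule finite_subset)
  moreover have "inj_on f (rand_space m l \<rho>)"
  proof (rule inj_onI)
    fix R R' assume R: "R \<in> rand_space m l \<rho>" and R': "R' \<in> rand_space m l \<rho>" and e: "f R = f R'"
    show "R = R'"
    proof (intro ext)
      fix i s q
      show "R i s q = R' i s q"
      proof (cases "i < m \<and> s < l \<and> q < \<rho>")
        case True
        then have "f R (i,s,q) = f R' (i,s,q)" using e by simp
        then show ?thesis using True by (simp add: f_def box_def)
      next
        case False then show ?thesis using R R' by (simp add: rand_space_def)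
      qed
    qed
  qed
  ultimately show ?thesis by (rule finite_imageD)
qed

lemma finite_monoms: "finite (monoms m d)"
proof -
  define f where "f = (\<lambda>\<alpha>::nat\<Rightarrow>nat. restrict \<alpha> {..<m})"
  have "f ` monoms m d \<subseteq> PiE {..<m} (\<lambda>_. {..d})"
  proof
    fix y assume "y \<in> f ` monoms m d"
    then obtain \<alpha> where a: "\<alpha> \<in> monoms m d" "y = f \<alpha>" by auto
    have "\<alpha> i \<le> d" if "i < m" for i
    proof -
      have "\<alpha> i \<le> (\<Sum>i<m. \<alpha> i)" using that by (intro member_le_sum) auto
      then show ?thesis using a by (simp add: monoms_def)
    qed
    then show "y \<in> PiE {..<m} (\<lambda>_. {..d})" using a by (auto simp: f_def)
  qed
  moreover have "finite (PiE {..<m} (\<lambda>_. {..d}))" by (rule finite_PiE) auto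
  ultimately have "finite (f ` monoms m d)" by (rule finite_subset)
  moreover have "inj_on f (monoms m d)"
  proof (rule inj_onI)
    fix a a' assume a: "a \<in> monoms m d" and a': "a' \<in> monoms m d" and e: "f a = f a'"
    show "a = a'"
    proof
      fix i show "a i = a' i"
      proof (cases "i < m")
        case True then show ?thesis using fun_cong[OF e, of i] by (simp add: f_def)
      next
        case False then show ?thesis using a a' by (simp add: monoms_def)
      qed
    qed
  qed
  ultimately show ?thesis by (rule finite_imageD)
qed

definition Dsum :: "nat \<Rightarrow> (nat set \<Rightarrow> 'a::comm_ring_1) \<Rightarrow> 'a" where
  "Dsum d f = (\<Sum>S\<in>Pow {..<d}. (-1)^(d - card S) * f S)"

lemma Dsum_sum: "finite X \<Longrightarrow> Dsum d (\<lambda>S. \<Sum>x\<in>X. g x S) = (\<Sum>x\<in>X. Dsum d (g x))"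
  unfolding Dsum_def sum_distrib_left by (rule sum.swap)

lemma Dsum_mult: "Dsum d (\<lambda>S. c * g S) = c * Dsum d g"
  unfolding Dsum_def by (simp add: sum_distrib_left mult.left_commute)

lemma Dsum_top: "Dsum d (\<lambda>S. if {..<d} \<subseteq> S then c else 0) = c"
proof -
  have "Dsum d (\<lambda>S. if {..<d} \<subseteq> S then c else 0)
      = (\<Sum>S\<in>Pow {..<d}. if S = {..<d} then c else 0)"
    unfolding Dsum_def by (intro sum.cong) auto
  also have "\<dots> = c" by (simp add: sum.delta)
  finally show ?thesis .
qed

lemma Dsum_kill:
  assumes i0: "i0 < d" and f: "\<And>S. f S = f (S - {i0})"
  shows "Dsum d f = 0"
proof -
  define P0 where "P0 = Pow ({..<d} - {i0})"
  have Pw: "Pow {..<d} = P0 \<union> insert i0 ` P0"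
  proof -
    have "{..<d} = insert i0 ({..<d} - {i0})" using i0 by auto
    then show ?thesis unfolding P0_def by (metis Pow_insert)
  qed
  have disj: "P0 \<inter> insert i0 ` P0 = {}" unfolding P0_def by auto
  have inj: "inj_on (insert i0) P0" unfolding P0_def by (rule inj_onI) (metis Diff_insert_absorb PowD subset_Diff_insert)
  have fin: "finite P0" unfolding P0_def by simp
  have "Dsum d f = (\<Sum>S\<in>P0. (-1)^(d - card S) * f S) + (\<Sum>S\<in>insert i0 ` P0. (-1)^(d - card S) * f S)"
    unfolding Dsum_def Pw using disj fin by (simp add: sum.union_disjoint)
  also have "(\<Sum>S\<in>insert i0 ` P0. (-1)^(d - card S) * f S) = (\<Sum>S\<in>P0. (-1)^(d - card (insert i0 S)) * f (insert i0 S))"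
    using inj by (simp add: sum.reindex)
  also have "\<dots> = (\<Sum>S\<in>P0. - ((-1)^(d - card S) * f S))"
  proof (rule sum.cong)
    fix S assume S: "S \<in> P0"
    then have fS: "finite S" "i0 \<notin> S" "S \<subseteq> {..<d} - {i0}" unfolding P0_def by (auto intro: finite_subset)
    have "card S \<le> card ({..<d} - {i0})" using fS by (intro card_mono) auto
    then have cS: "card S < d" using i0 by simp
    have "d - card S = Suc (d - card (insert i0 S))" using fS cS by simp
    moreover have "f (insert i0 S) = f S"
    proof -
      have "insert i0 S - {i0} = S" using fS by auto
      then show ?thesis using f[of "insert i0 S"] by metis
    qed
    ultimately show "(-1)^(d - card (insert i0 S)) * f (insert i0 S) = - ((-1)^(d - card S) * f S)"
      by simp
  qed simp
  finally show ?thesis by (simp add: sum_negf)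
qed


lemma alpha0_mem: "d \<le> m \<Longrightarrow> (\<lambda>i. if i < d then 1 else 0) \<in> monoms m d"
proof -
  assume dm: "d \<le> m"
  have "(\<Sum>i<m. (if i < d then 1 else 0::nat)) = (\<Sum>i\<in>{i\<in>{..<m}. i < d}. 1)"
    by (rule sum.inter_filter[symmetric]) simp
  also have "{i\<in>{..<m}. i < d} = {..<d}" using dm by auto
  finally show ?thesis using dm by (auto simp: monoms_def)
qed

lemma peval_mono:
  assumes dm: "d \<le> m"
  shows "peval d m (\<lambda>\<alpha>. if \<alpha> = (\<lambda>i. if i < d then 1 else 0) then c else 0) x = c * (\<Prod>i<d. x i)"
proof -
  define a0 where "a0 = (\<lambda>i::nat. if i < d then 1 else (0::nat))"
  have mem: "a0 \<in> monoms m d" unfolding a0_def using alpha0_mem[OF dm] .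
  have "peval d m (\<lambda>\<alpha>. if \<alpha> = a0 then c else 0) x
      = (\<Sum>\<alpha>\<in>monoms m d. if \<alpha> = a0 then c * (\<Prod>i<m. x i ^ \<alpha> i) else 0)"
    unfolding peval_def by (intro sum.cong) auto
  also have "\<dots> = c * (\<Prod>i<m. x i ^ a0 i)" using mem finite_monoms by (simp add: sum.delta')
  also have "(\<Prod>i<m. x i ^ a0 i) = (\<Prod>i<m. if i < d then x i else 1)"
    unfolding a0_def by (intro prod.cong) auto
  also have "\<dots> = (\<Prod>i\<in>{i\<in>{..<m}. i < d}. x i)" by (rule prod.inter_filter[symmetric]) simp
  also have "{i\<in>{..<m}. i < d} = {..<d}" using dm by auto
  finally show ?thesis unfolding a0_def .
qed

lemma prod_indicator: "(\<Prod>i<(d::nat). if i \<in> S then (1::'a::comm_semiring_1) else 0) = (if {..<d} \<subseteq> S then 1 else 0)"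
proof (cases "{..<d} \<subseteq> S")
  case True then show ?thesis by (intro trans[OF prod.neutral]) auto
next
  case False
  then obtain i where "i < d" "i \<notin> S" by auto
  then have "(\<Prod>i<d. if i \<in> S then (1::'a) else 0) = 0" by (intro prod_zero) auto
  then show ?thesis using False by simp
qed

lemma share_zero: "share \<rho> sd A B j 0 (\<lambda>q. 0) = (\<lambda>u. (0::'a::field))"
  by (simp add: share_def fun_eq_iff)


lemma key:
  fixes A :: "nat \<Rightarrow> nat \<Rightarrow> 'a::{finite,field}"
    and B :: "nat \<Rightarrow> nat \<Rightarrow> nat \<Rightarrow> 'a"
    and ev :: "(nat \<Rightarrow> (nat \<Rightarrow> nat) \<Rightarrow> 'a) \<Rightarrow> nat \<Rightarrow> (nat \<Rightarrow> nat \<Rightarrow> nat \<Rightarrow> 'a) \<Rightarrow> (nat \<Rightarrow> 'a)"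
    and L :: "nat \<Rightarrow> nat \<Rightarrow> nat \<Rightarrow> 'a"
    and t k d m l \<rho> :: nat and sd b :: "nat \<Rightarrow> nat"
    and T :: "nat \<Rightarrow> nat set" and G :: "nat set"
  assumes hss: "linear_HSS_POLY k d m l \<rho> sd A B b ev L"
    and priv: "HSS_private t k m l \<rho> sd A B" and dm: "d \<le> m"
    and T: "\<And>i. i < d \<Longrightarrow> T i \<subseteq> {..<k} \<and> card (T i) \<le> t"
    and G: "G \<subseteq> {..<k}" and cover: "\<And>j. j < k \<Longrightarrow> j \<notin> G \<Longrightarrow> \<exists>i<d. j \<in> T i"
  shows "l \<le> (\<Sum>j\<in>G. b j)"
proof -
  have ex: "\<exists>R'\<in>rand_space m l \<rho>. \<forall>j\<in>T i. \<forall>s<l. share \<rho> sd A B j 1 (R' i s) = (\<lambda>_. 0)"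
    if i: "i < d" for i
  proof -
    define W where "W = (\<lambda>(j::nat) (i::nat) (s::nat) (u::nat). (0::'a))"
    define S0 where "S0 = {R \<in> rand_space m l \<rho>. \<forall>j\<in>T i. view \<rho> sd A B m l j (\<lambda>_ _. 0) R = W j}"
    define S1 where "S1 = {R \<in> rand_space m l \<rho>. \<forall>j\<in>T i. view \<rho> sd A B m l j (\<lambda>_ _. 1) R = W j}"
    have "card S0 = card S1" unfolding S0_def S1_def
      using priv[unfolded HSS_private_def, rule_format, where T="T i" and X="\<lambda>_ _. 0" and X'="\<lambda>_ _. 1" and W=W] T[OF i] by blast
    moreover have "(\<lambda>_ _ _. 0) \<in> S0"
      unfolding S0_def W_def by (auto simp: rand_space_def view_def share_def fun_eq_iff)
    moreover have "finite S0" unfolding S0_def by (rule finite_subset[OF _ finite_rand_space]) auto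
    ultimately have "card S1 > 0" by (metis card_gt_0_iff empty_iff)
    then obtain R' where R': "R' \<in> S1" by (metis card.empty empty_iff less_irrefl subsetI subset_antisym empty_subsetI)
    have "share \<rho> sd A B j 1 (R' i s) = (\<lambda>_. 0)" if j: "j \<in> T i" and s: "s < l" for j s
    proof -
      have "view \<rho> sd A B m l j (\<lambda>_ _. 1) R' = W j" using R' j unfolding S1_def by blast
      then have "view \<rho> sd A B m l j (\<lambda>_ _. 1) R' i s = W j i s" by simp
      then show ?thesis using i dm s unfolding view_def W_def by simp
    qed
    then show ?thesis using R' unfolding S1_def by blast
  qed
  have "\<forall>i. \<exists>R'. i < d \<longrightarrow> R' \<in> rand_space m l \<rho> \<and> (\<forall>j\<in>T i. \<forall>s<l. share \<rho> sd A B j 1 (R' i s) = (\<lambda>_. 0))"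
    using ex by blast
  then have "\<exists>Rf. \<forall>i. i < d \<longrightarrow> Rf i \<in> rand_space m l \<rho> \<and> (\<forall>j\<in>T i. \<forall>s<l. share \<rho> sd A B j 1 (Rf i i s) = (\<lambda>_. 0))"
    by (rule choice)
  then obtain Rf where Rf0: "\<forall>i. i < d \<longrightarrow> Rf i \<in> rand_space m l \<rho> \<and> (\<forall>j\<in>T i. \<forall>s<l. share \<rho> sd A B j 1 (Rf i i s) = (\<lambda>_. 0))"
    by blast
  define XS where "XS = (\<lambda>(S::nat set) (i::nat) (s::nat). if i \<in> S then (1::'a) else 0)"
  define RS where "RS = (\<lambda>(S::nat set) (i::nat) (s::nat). if i \<in> S \<and> i < d then Rf i i s else (\<lambda>q::nat. 0::'a))"
  define a0 where "a0 = (\<lambda>i::nat. if i < d then 1 else (0::nat))"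
  define fsv where "fsv = (\<lambda>(v::nat\<Rightarrow>'a) (s::nat) (\<alpha>::nat\<Rightarrow>nat). if \<alpha> = a0 then v s else 0)"
  define Y where "Y = (\<lambda>v S j. ev (fsv v) j (view \<rho> sd A B m l j (XS S) (RS S)))"
  have RS_in: "RS S \<in> rand_space m l \<rho>" for S
    using Rf0 unfolding RS_def rand_space_def by auto
  have view_inv: "view \<rho> sd A B m l j (XS S) (RS S) = view \<rho> sd A B m l j (XS (S - {i0})) (RS (S - {i0}))"
    if i0: "i0 < d" and j: "j \<in> T i0" for S i0 j
  proof (intro ext)
    fix i s u
    show "view \<rho> sd A B m l j (XS S) (RS S) i s u = view \<rho> sd A B m l j (XS (S - {i0})) (RS (S - {i0})) i s u"
    proof (cases "i < m \<and> s < l")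
      case False then show ?thesis by (auto simp add: view_def)
    next
      case True
      show ?thesis
      proof (cases "i = i0")
        case False then show ?thesis using True by (simp add: view_def XS_def RS_def)
      next
        case ii: True
        show ?thesis
        proof (cases "i0 \<in> S")
          case False then have "S - {i0} = S" by auto
          then show ?thesis by simp
        next
          case iS: True
          have "share \<rho> sd A B j 1 (Rf i0 i0 s) = (\<lambda>_. 0)" using Rf0 i0 j True by blast
          then show ?thesis using True ii iS i0 by (simp add: view_def XS_def RS_def share_zero)
        qed
      qed
    qed
  qed
  have corr: "(\<Sum>j<k. \<Sum>u<b j. L s j u * Y v S j u) = v s * (if {..<d} \<subseteq> S then 1 else 0)"
    if s: "s < l" for v S s
  proof -
    have a0m: "a0 \<in> monoms m d" unfolding a0_def using alpha0_mem[OF dm] .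
    have P: "\<forall>s<l. fsv v s \<in> POLY d m" using a0m by (auto simp: POLY_def fsv_def)
    have "(\<forall>s<l. fsv v s \<in> POLY d m) \<longrightarrow> RS S \<in> rand_space m l \<rho> \<longrightarrow>
        (\<forall>s<l. (\<Sum>j<k. \<Sum>u<b j. L s j u * ev (fsv v) j (view \<rho> sd A B m l j (XS S) (RS S)) u)
               = peval d m (fsv v s) (\<lambda>i. XS S i s))"
      using hss unfolding linear_HSS_POLY_def by blast
    then have "(\<Sum>j<k. \<Sum>u<b j. L s j u * Y v S j u) = peval d m (fsv v s) (\<lambda>i. XS S i s)"
      using P RS_in s unfolding Y_def by blast
    also have "\<dots> = v s * (\<Prod>i<d. XS S i s)"
      unfolding fsv_def a0_def by (rule peval_mono[OF dm])
    also have "(\<Prod>i<d. XS S i s) = (if {..<d} \<subseteq> S then 1 else 0)"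
      unfolding XS_def by (rule prod_indicator)
    finally show ?thesis .
  qed
  have Dz: "Dsum d (\<lambda>S. Y v S j u) = 0" if jk: "j < k" "j \<notin> G" for v j u
  proof -
    obtain i0 where i0: "i0 < d" "j \<in> T i0" using cover[OF jk] by blast
    show ?thesis
    proof (rule Dsum_kill[OF i0(1)])
      fix S show "Y v S j u = Y v (S - {i0}) j u" unfolding Y_def view_inv[OF i0, of S] by (rule refl)
    qed
  qed
  have Dc: "(\<Sum>j\<in>G. \<Sum>u<b j. L s j u * Dsum d (\<lambda>S. Y v S j u)) = v s" if s: "s < l" for v s
  proof -
    have "(\<Sum>j\<in>G. \<Sum>u<b j. L s j u * Dsum d (\<lambda>S. Y v S j u))
        = (\<Sum>j<k. \<Sum>u<b j. L s j u * Dsum d (\<lambda>S. Y v S j u))"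
      by (rule sum.mono_neutral_left) (use G Dz in auto)
    also have "\<dots> = Dsum d (\<lambda>S. \<Sum>j<k. \<Sum>u<b j. L s j u * Y v S j u)"
      by (simp add: Dsum_sum Dsum_mult)
    also have "\<dots> = Dsum d (\<lambda>S. v s * (if {..<d} \<subseteq> S then 1 else 0))"
      using corr[OF s] by simp
    also have "\<dots> = v s" by (simp only: Dsum_mult Dsum_top) simp
    finally show ?thesis .
  qed
  define I where "I = Sigma G (\<lambda>j. {..<b j})"
  define \<Phi> where "\<Phi> = (\<lambda>y::nat\<times>nat \<Rightarrow> 'a. restrict (\<lambda>s. \<Sum>j\<in>G. \<Sum>u<b j. L s j u * y (j,u)) {..<l})"
  have finG: "finite G" using G finite_subset by blast
  have finI: "finite I" unfolding I_def using finG by auto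
  have sub: "PiE {..<l} (\<lambda>_. UNIV) \<subseteq> \<Phi> ` PiE I (\<lambda>_. UNIV)"
  proof
    fix v :: "nat \<Rightarrow> 'a" assume v: "v \<in> PiE {..<l} (\<lambda>_. UNIV)"
    define y where "y = restrict (\<lambda>(j,u). Dsum d (\<lambda>S. Y v S j u)) I"
    have yI: "y \<in> PiE I (\<lambda>_. UNIV)" unfolding y_def by auto
    have "\<Phi> y = v"
    proof
      fix s show "\<Phi> y s = v s"
      proof (cases "s < l")
        case True
        have "\<Phi> y s = (\<Sum>j\<in>G. \<Sum>u<b j. L s j u * y (j,u))" using True by (simp add: \<Phi>_def)
        also have "\<dots> = (\<Sum>j\<in>G. \<Sum>u<b j. L s j u * Dsum d (\<lambda>S. Y v S j u))"
          by (intro sum.cong refl) (auto simp: y_def I_def)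
        also have "\<dots> = v s" by (rule Dc[OF True])
        finally show ?thesis .
      next
        case False
        then have "v s = undefined" using PiE_arb[OF v, of s] by simp
        then show ?thesis using False by (simp add: \<Phi>_def)
      qed
    qed
    then show "v \<in> \<Phi> ` PiE I (\<lambda>_. UNIV)" using yI by blast
  qed
  have "CARD('a) ^ l = card (PiE {..<l} (\<lambda>_. (UNIV::'a set)))" by (simp add: card_PiE)
  also have "\<dots> \<le> card (\<Phi> ` PiE I (\<lambda>_. UNIV))"
    by (rule card_mono[OF finite_imageI[OF finite_PiE[OF finI]] sub]) simp
  also have "\<dots> \<le> card (PiE I (\<lambda>_. (UNIV::'a set)))" by (rule card_image_le) (simp add: finite_PiE finI)
  also have "\<dots> = CARD('a) ^ card I" using finI by (simp add: card_PiE)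
  also have "card I = (\<Sum>j\<in>G. b j)" unfolding I_def using finG by simp
  finally have le: "CARD('a) ^ l \<le> CARD('a) ^ (\<Sum>j\<in>G. b j)" .
  have "card {0::'a, 1} \<le> CARD('a)" by (rule card_mono) auto
  then have "1 < CARD('a)" by simp
  then show ?thesis using le by (rule power_le_imp_le_exp)
qed


lemma rot_sum:
  assumes k: "0 < (k::nat)"
  shows "(\<Sum>c<k. f ((c + p) mod k)) = (\<Sum>j<k. (f j :: 'b::comm_monoid_add))"
proof -
  have inj: "inj_on (\<lambda>c. (c + p) mod k) {..<k}"
  proof (rule inj_onI)
    fix c c' assume c: "c \<in> {..<k}" "c' \<in> {..<k}" and e: "(c + p) mod k = (c' + p) mod k"
    have "int c mod int k = int c' mod int k"
    proof -
      have "(int c + int p) mod int k = (int c' + int p) mod int k" using e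
        by (metis of_nat_add zmod_int)
      then have "((int c + int p) - int p) mod int k = ((int c' + int p) - int p) mod int k"
        by (metis mod_diff_left_eq)
      then show ?thesis by simp
    qed
    then show "c = c'" using c by simp
  qed
  have img: "(\<lambda>c. (c + p) mod k) ` {..<k} = {..<k}"
    by (rule card_subset_eq) (use k inj in \<open>auto simp: card_image\<close>)
  have "(\<Sum>j<k. f j) = (\<Sum>j\<in>(\<lambda>c. (c + p) mod k) ` {..<k}. f j)" using img by simp
  also have "\<dots> = (\<Sum>c<k. f ((c + p) mod k))" using inj by (simp add: sum.reindex)
  finally show ?thesis by simp
qed

theorem mainTheorem9:
  fixes A :: "nat \<Rightarrow> nat \<Rightarrow> 'a::{finite,field}"
    and B :: "nat \<Rightarrow> nat \<Rightarrow> nat \<Rightarrow> 'a"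
    and ev :: "(nat \<Rightarrow> (nat \<Rightarrow> nat) \<Rightarrow> 'a) \<Rightarrow> nat \<Rightarrow> (nat \<Rightarrow> nat \<Rightarrow> nat \<Rightarrow> 'a) \<Rightarrow> (nat \<Rightarrow> 'a)"
    and L :: "nat \<Rightarrow> nat \<Rightarrow> nat \<Rightarrow> 'a"
    and t k d m l \<rho> :: nat and sd b :: "nat \<Rightarrow> nat"
  assumes "0 < t" "0 < k" "0 < d" "0 < m" "0 < l" "d \<le> m"
    and "linear_HSS_POLY k d m l \<rho> sd A B b ev L"
    and "HSS_private t k m l \<rho> sd A B"
  shows "d * t < k
    \<and> download_cost TYPE('a) k b \<ge> real k * real l * log 2 (real CARD('a)) / (real k - real (d * t))
    \<and> download_rate TYPE('a) l k b \<le> 1 - real (d * t) / real k"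
proof -
  note a = assms
  define N where "N = d * t"
  define rot where "rot = (\<lambda>c p. (c + p) mod k)"
  have bound: "l \<le> (\<Sum>p\<in>{N..<k}. b (rot c p))" if c: "c < k" for c
  proof -
    define G where "G = rot c ` {N..<k}"
    define T where "T = (\<lambda>i. rot c ` {i*t..<(i+1)*t})"
    have "l \<le> (\<Sum>j\<in>G. b j)"
    proof (rule key[OF a(7) a(8) a(6)])
      fix i assume "i < d"
      have "card (T i) \<le> card {i*t..<(i+1)*t}" unfolding T_def by (rule card_image_le) simp
      then show "T i \<subseteq> {..<k} \<and> card (T i) \<le> t" using a(2) by (auto simp: T_def rot_def)
    next
      show "G \<subseteq> {..<k}" using a(2) by (auto simp: G_def rot_def)
    next
      fix j assume j: "j < k" "j \<notin> G"
      define p where "p = (j + k - c) mod k"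
      have pk: "p < k" using a(2) by (simp add: p_def)
      have "rot c p = (c + (j + k - c)) mod k" unfolding rot_def p_def by (simp add: mod_add_right_eq)
      also have "c + (j + k - c) = j + k" using c by simp
      finally have rp: "rot c p = j" using j by simp
      have "p < N"
      proof (rule ccontr)
        assume "\<not> p < N"
        then have "j \<in> G" unfolding G_def using pk rp by (metis atLeastLessThan_iff image_eqI not_less)
        then show False using j by simp
      qed
      define i where "i = p div t"
      have "i < d" using \<open>p < N\<close> a(1) unfolding i_def N_def by (simp add: less_mult_imp_div_less)
      moreover have "p \<in> {i*t..<(i+1)*t}"
      proof -
        have "i * t \<le> p" unfolding i_def by (rule div_times_less_eq_dividend)
        moreover have "p < t + i * t" unfolding i_def using a(1) by (rule dividend_less_div_times)
        ultimately show ?thesis by simp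
      qed
      ultimately show "\<exists>i<d. j \<in> T i" unfolding T_def using rp by blast
    qed
    also have "\<dots> \<le> (\<Sum>p\<in>{N..<k}. b (rot c p))" unfolding G_def
      using sum_image_le[of "{N..<k}" b "rot c"] by (simp add: comp_def)
    finally show ?thesis .
  qed
  define Sb where "Sb = (\<Sum>j<k. b j)"
  have "k * l \<le> (\<Sum>c<k. \<Sum>p\<in>{N..<k}. b (rot c p))"
    using sum_mono[of "{..<k}" "\<lambda>_. l" "\<lambda>c. \<Sum>p\<in>{N..<k}. b (rot c p)"] bound by simp
  also have "\<dots> = (\<Sum>p\<in>{N..<k}. \<Sum>c<k. b (rot c p))" by (rule sum.swap)
  also have "\<dots> = (\<Sum>p\<in>{N..<k}. Sb)" unfolding rot_def Sb_def using a(2) by (simp add: rot_sum)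
  also have "\<dots> = (k - N) * Sb" by simp
  finally have main: "k * l \<le> (k - N) * Sb" .
  have Nk: "N < k"
  proof (rule ccontr)
    assume "\<not> N < k" then have "k - N = 0" by simp
    then show False using main a(2) a(5) by simp
  qed
  have Sbpos: "0 < Sb"
  proof (rule ccontr)
    assume "\<not> 0 < Sb" then have "Sb = 0" by simp
    then show False using main a(2) a(5) by simp
  qed
  have mainR: "real k * real l \<le> (real k - real N) * real Sb"
    using main Nk by (metis of_nat_diff of_nat_le_iff of_nat_mult less_imp_le)
  have "card {0::'a, 1} \<le> CARD('a)" by (rule card_mono) auto
  then have q: "2 \<le> real CARD('a)" by simp
  define lg where "lg = log 2 (real CARD('a))"
  have lgpos: "0 < lg" unfolding lg_def using q by simp
  have cost: "download_cost TYPE('a) k b = real Sb * lg" by (simp add: download_cost_def Sb_def lg_def)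
  have kN: "0 < real k - real N" using Nk by simp
  have c2: "real k * real l * lg / (real k - real N) \<le> real Sb * lg"
    using mainR lgpos kN by (simp add: divide_le_eq mult.commute mult.left_commute mult_right_mono)
  have rate: "download_rate TYPE('a) l k b = real l / real Sb"
  proof -
    have "log 2 (real CARD('a)) \<noteq> 0" using lgpos unfolding lg_def by (metis less_irrefl)
    then show ?thesis using cost unfolding download_rate_def lg_def by simp
  qed
  have "real l / real Sb \<le> 1 - real N / real k"
  proof -
    have "1 - real N / real k = (real k - real N) / real k" using a(2) by (simp add: field_simps)
    moreover have "real l / real Sb \<le> (real k - real N) / real k"
      using mainR Sbpos a(2) by (simp add: divide_le_eq le_divide_eq mult.commute)
    ultimately show ?thesis by simp
  qed
  then show ?thesis using Nk c2 cost rate unfolding N_def lg_def by simp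
qed

end
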